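(* Let $n\ge1$, $\gamma>0$, and let $A:[0,1]^{2n}\to\mathbb{R}_+^{n\times n}$ be a $\mathcal C^1$ matrix-valued function, defining the system $\dot{x} = -[x]A(x,y)\,y$, $\dot{y} = [x]A(x,y)\,y-\gamma y$. Suppose that, for all indices $i,j,k\in\{1,\dots,n\}$ with $k\ne i$, $$A_{ij}+x_i\frac{\partial A_{ij}}{\partial x_i}\ge 0,\qquad \frac{\partial A_{ij}}{\partial x_k}\ge 0$$ (at every point of the domain of $A$). Then the stability condition $\lambda_{\max}([x]A(x,\mathbf 0))<\gamma$ for equilibria $(x,\mathbf 0)$ is monotone: for all $x,z\in[0,1]^n$ with $x\le z$ one has $\lambda_{\max}([x]A(x,\mathbf 0))\le\lambda_{\max}([z]A(z,\mathbf 0))$; in particular, if $(z,\mathbf 0)$ satisfies $\lambda_{\max}([z]A(z,\mathbf 0))<\gamma$, then so does every $(x,\mathbf 0)$ with $x\le z$.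
   Context: For $x\in\mathbb{R}^n$, $[x]$ denotes the diagonal matrix with diagonal $x$. For a nonnegative square matrix $B$, $\lambda_{\max}(B)$ denotes its dominant (Perron) eigenvalue, i.e. its spectral radius. Vector inequalities are entrywise. The equilibria of the system are the points $(x,\mathbf 0)$, $x\in[0,1]^n$. *)

theory Defs
  imports "HOL-Analysis.Analysis"
begin

definition unit_cube :: "(real^'n) set" where
  "unit_cube = {x. \<forall>i. 0 \<le> x$i \<and> x$i \<le> 1}"

definition diag_mat :: "real^'n \<Rightarrow> real^'n^'n" where
  "diag_mat x = (\<chi> i j. if i = j then x$i else 0)"

text \<open>Spectral radius: largest modulus of a (complex) eigenvalue.
  For a nonnegative matrix this is its dominant (Perron) eigenvalue.\<close>
definition spec_rad :: "real^'n^'n \<Rightarrow> real" where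
  "spec_rad M = Max {cmod l | l. \<exists>v::complex^'n. v \<noteq> 0 \<and>
       (\<chi> i j. complex_of_real (M$i$j)) *v v = (\<chi> i. l * v$i)}"

end

theory Submission
  imports Defs "Jordan_Normal_Form.Spectral_Radius"
begin


no_notation Matrix.vec_index (infixl \<open>$\<close> 100)
notation Matrix.vec_index (infixl \<open>$.\<close> 100)
hide_const (open) Matrix.diag_mat

definition cpx :: "real mat \<Rightarrow> complex mat" where
  "cpx M = map_mat complex_of_real M"

lemma mv_entry:
  assumes "A \<in> carrier_mat n n" "v \<in> carrier_vec n" "i < n"
  shows "(A *\<^sub>v v) $. i = (\<Sum>j<n. A $$ (i,j) * v $. j)"
  using assms by (simp add: index_mult_mat_vec scalar_prod_def atLeast0LessThan)

lemma mm_entry: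
  assumes "A \<in> carrier_mat n n" "B \<in> carrier_mat n n" "i < n" "j < n"
  shows "(A * B) $$ (i,j) = (\<Sum>k<n. A $$ (i,k) * B $$ (k,j))"
  using assms by (simp add: index_mult_mat scalar_prod_def atLeast0LessThan)

lemma pow_nonneg:
  fixes T :: "real mat"
  assumes T: "T \<in> carrier_mat n n" and nn: "\<And>i j. i < n \<Longrightarrow> j < n \<Longrightarrow> T $$ (i,j) \<ge> 0"
  shows "i < n \<Longrightarrow> j < n \<Longrightarrow> (T ^\<^sub>m k) $$ (i,j) \<ge> 0"
proof (induction k arbitrary: i j)
  case 0
  then show ?case using T by auto
next
  case (Suc k)
  have "(T ^\<^sub>m Suc k) $$ (i,j) = (\<Sum>l<n. (T ^\<^sub>m k) $$ (i,l) * T $$ (l,j))"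
    using Suc.prems T by (simp add: mm_entry del: index_mult_mat)
  also have "\<dots> \<ge> 0" using Suc nn by (intro sum_nonneg mult_nonneg_nonneg) auto
  finally show ?case .
qed

lemma pow_ge:
  fixes T :: "real mat"
  assumes T: "T \<in> carrier_mat n n" and nn: "\<And>i j. i < n \<Longrightarrow> j < n \<Longrightarrow> T $$ (i,j) \<ge> 0"
    and w: "w \<in> carrier_vec n" and q: "q \<ge> 0"
    and ge: "\<And>i. i < n \<Longrightarrow> q * w $. i \<le> (T *\<^sub>v w) $. i"
  shows "i < n \<Longrightarrow> q ^ k * w $. i \<le> (T ^\<^sub>m k *\<^sub>v w) $. i"
proof (induction k arbitrary: i)
  case 0
  then show ?case using w T by simp
next
  case (Suc k)
  have "(T ^\<^sub>m Suc k *\<^sub>v w) = T ^\<^sub>m k *\<^sub>v (T *\<^sub>v w)"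
    using T w by (simp add: assoc_mult_mat_vec[of _ n n _ n])
  hence "(T ^\<^sub>m Suc k *\<^sub>v w) $. i = (\<Sum>j<n. (T ^\<^sub>m k) $$ (i,j) * (T *\<^sub>v w) $. j)"
    using Suc.prems T w by (simp add: mv_entry[of _ n] del: index_mult_mat_vec)
  also have "\<dots> \<ge> (\<Sum>j<n. (T ^\<^sub>m k) $$ (i,j) * (q * w $. j))"
    using Suc.prems ge pow_nonneg[OF T nn]
    by (intro sum_mono mult_left_mono) auto
  also have "(\<Sum>j<n. (T ^\<^sub>m k) $$ (i,j) * (q * w $. j)) = q * (T ^\<^sub>m k *\<^sub>v w) $. i"
    using Suc.prems T w by (simp add: mv_entry[of _ n] sum_distrib_left algebra_simps del: index_mult_mat_vec)
  also have "\<dots> \<ge> q * (q ^ k * w $. i)" using Suc q by (intro mult_left_mono) auto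
  finally show ?case by (simp add: algebra_simps)
qed

lemma perron_lower:
  fixes S :: "real mat"
  assumes S: "S \<in> carrier_mat n n" and nn: "\<And>i j. i < n \<Longrightarrow> j < n \<Longrightarrow> S $$ (i,j) \<ge> 0"
    and w: "w \<in> carrier_vec n" and wnn: "\<And>i. i < n \<Longrightarrow> w $. i \<ge> 0"
    and i0: "i0 < n" "w $. i0 > 0" and r: "r \<ge> 0"
    and ge: "\<And>i. i < n \<Longrightarrow> r * w $. i \<le> (S *\<^sub>v w) $. i"
  shows "r \<le> spectral_radius (cpx S)"
proof (rule ccontr)
  assume "\<not> ?thesis"
  hence lt: "spectral_radius (cpx S) < r" by simp
  have n: "n > 0" using i0 by auto
  have cS: "cpx S \<in> carrier_mat n n" using S by (simp add: cpx_def)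
  have rho0: "spectral_radius (cpx S) \<ge> 0"
    using spectral_radius_mem_max(1)[OF cS n] by auto
  define s where "s = (spectral_radius (cpx S) + r) / 2"
  have s0: "s > 0" and sr: "s < r" and ss: "spectral_radius (cpx S) < s"
    using lt rho0 by (auto simp: s_def)
  define S' where "S' = mat n n (\<lambda>(i,j). S $$ (i,j) / s)"
  have S': "S' \<in> carrier_mat n n" by (simp add: S'_def)
  have cS': "cpx S' \<in> carrier_mat n n" using S' by (simp add: cpx_def)
  have nn': "\<And>i j. i < n \<Longrightarrow> j < n \<Longrightarrow> S' $$ (i,j) \<ge> 0"
    using nn s0 by (simp add: S'_def)
  have "spectral_radius (cpx S') < 1"
  proof -
    obtain l where l: "l \<in> spectrum (cpx S')" and nl: "norm l = spectral_radius (cpx S')"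
      using spectral_radius_mem_max(1)[OF cS' n] by auto
    from l obtain v where ev: "eigenvector (cpx S') v l"
      unfolding spectrum_def eigenvalue_def by auto
    hence v: "v \<in> carrier_vec n" "v \<noteq> 0\<^sub>v n" and eq: "cpx S' *\<^sub>v v = l \<cdot>\<^sub>v v"
      using cS' unfolding eigenvector_def by auto
    have "cpx S *\<^sub>v v = (of_real s * l) \<cdot>\<^sub>v v"
    proof (rule eq_vecI)
      fix i assume "i < dim_vec ((of_real s * l) \<cdot>\<^sub>v v)"
      hence i: "i < n" using v by simp
      have "(cpx S *\<^sub>v v) $. i = (\<Sum>j<n. of_real s * (cpx S' $$ (i,j) * v $. j))"
        using i v cS cS' s0 by (simp add: mv_entry[of _ n] cpx_def S'_def del: index_mult_mat_vec)
      also have "\<dots> = of_real s * (cpx S' *\<^sub>v v) $. i"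
        using i v cS' by (simp add: mv_entry[of _ n] sum_distrib_left del: index_mult_mat_vec)
      also have "\<dots> = ((of_real s * l) \<cdot>\<^sub>v v) $. i" using eq i v by simp
      finally show "(cpx S *\<^sub>v v) $. i = ((of_real s * l) \<cdot>\<^sub>v v) $. i" .
    qed (use v cS in simp)
    hence "eigenvector (cpx S) v (of_real s * l)"
      using v cS unfolding eigenvector_def by simp
    hence "of_real s * l \<in> spectrum (cpx S)"
      unfolding spectrum_def eigenvalue_def by auto
    hence "norm (of_real s * l) \<le> spectral_radius (cpx S)"
      using spectral_radius_mem_max(2)[OF cS n] by auto
    hence "s * norm l \<le> spectral_radius (cpx S)" using s0 by (simp add: norm_mult)
    hence "s * norm l < s * 1" using ss by linarith
    hence "norm l < 1" using mult_less_cancel_left_pos[OF s0] by blast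
    thus ?thesis using nl by simp
  qed
  then obtain c where c: "\<And>k. norm_bound (cpx S' ^\<^sub>m k) c"
    using spectral_radius_jnf_norm_bound_less_1_upper_triangular[OF cS'] by auto
  have bnd: "\<And>k i j. i < n \<Longrightarrow> j < n \<Longrightarrow> (S' ^\<^sub>m k) $$ (i,j) \<le> c"
  proof -
    fix k i j assume ij: "i < n" "j < n"
    have "cpx S' ^\<^sub>m k = cpx (S' ^\<^sub>m k)"
      unfolding cpx_def using of_real_hom.mat_hom_pow[OF S', of k] by (rule sym)
    hence "norm (cpx (S' ^\<^sub>m k) $$ (i,j)) \<le> c" using c[of k] ij S'
      unfolding norm_bound_def by (metis carrier_matD(1,2) cS' pow_carrier_mat)
    thus "(S' ^\<^sub>m k) $$ (i,j) \<le> c" using ij S' by (simp add: cpx_def)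
  qed
  define q where "q = r / s"
  have q1: "q > 1" using sr s0 by (simp add: q_def)
  have ge': "\<And>i. i < n \<Longrightarrow> q * w $. i \<le> (S' *\<^sub>v w) $. i"
  proof -
    fix i assume i: "i < n"
    have "(S' *\<^sub>v w) $. i = (S *\<^sub>v w) $. i / s"
      using i S S' w by (simp add: mv_entry[of _ n] S'_def sum_divide_distrib del: index_mult_mat_vec)
    thus "q * w $. i \<le> (S' *\<^sub>v w) $. i" using ge[OF i] s0 by (simp add: q_def field_simps)
  qed
  define W where "W = (\<Sum>j<n. w $. j)"
  have "\<And>k. q ^ k * w $. i0 \<le> c * W"
  proof -
    fix k
    have "q ^ k * w $. i0 \<le> (S' ^\<^sub>m k *\<^sub>v w) $. i0"
      using pow_ge[OF S' nn' w _ ge' i0(1)] q1 by simp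
    also have "\<dots> = (\<Sum>j<n. (S' ^\<^sub>m k) $$ (i0,j) * w $. j)"
      using S' w i0 by (simp add: mv_entry[of _ n] del: index_mult_mat_vec)
    also have "\<dots> \<le> (\<Sum>j<n. c * w $. j)"
      using bnd i0 wnn by (intro sum_mono mult_right_mono) auto
    finally show "q ^ k * w $. i0 \<le> c * W" by (simp add: W_def sum_distrib_left)
  qed
  moreover obtain k where "c * W / w $. i0 < q ^ k" using real_arch_pow[OF q1] by auto
  ultimately show False using i0 by (smt (verit) pos_divide_less_eq)
qed

lemma perron_mono:
  fixes R S :: "real mat"
  assumes R: "R \<in> carrier_mat n n" and S: "S \<in> carrier_mat n n" and n: "n > 0"
    and nnR: "\<And>i j. i < n \<Longrightarrow> j < n \<Longrightarrow> R $$ (i,j) \<ge> 0"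
    and le: "\<And>i j. i < n \<Longrightarrow> j < n \<Longrightarrow> R $$ (i,j) \<le> S $$ (i,j)"
  shows "spectral_radius (cpx R) \<le> spectral_radius (cpx S)"
proof -
  have cR: "cpx R \<in> carrier_mat n n" using R by (simp add: cpx_def)
  obtain l where l: "l \<in> spectrum (cpx R)" and nl: "norm l = spectral_radius (cpx R)"
    using spectral_radius_mem_max(1)[OF cR n] by auto
  from l obtain v where ev: "eigenvector (cpx R) v l"
    unfolding spectrum_def eigenvalue_def by auto
  hence v: "v \<in> carrier_vec n" "v \<noteq> 0\<^sub>v n" and eq: "cpx R *\<^sub>v v = l \<cdot>\<^sub>v v"
    using cR unfolding eigenvector_def by auto
  define w where "w = vec n (\<lambda>i. cmod (v $. i))"
  have w: "w \<in> carrier_vec n" by (simp add: w_def)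
  obtain i0 where i0: "i0 < n" "v $. i0 \<noteq> 0"
    using v by (metis eq_vecI index_zero_vec(1,2) carrier_vecD)
  have nnS: "\<And>i j. i < n \<Longrightarrow> j < n \<Longrightarrow> S $$ (i,j) \<ge> 0" using nnR le by (meson order_trans)
  show ?thesis
  proof (rule perron_lower[OF S nnS w])
    show "\<And>i. i < n \<Longrightarrow> 0 \<le> w $. i" by (simp add: w_def)
    show "i0 < n" "0 < w $. i0" using i0 by (auto simp: w_def)
    show "0 \<le> spectral_radius (cpx R)" using nl by (metis norm_ge_zero)
    fix i assume i: "i < n"
    have "spectral_radius (cpx R) * w $. i = norm ((l \<cdot>\<^sub>v v) $. i)"
      using i v nl by (simp add: w_def norm_mult)
    also have "\<dots> = norm (\<Sum>j<n. of_real (R $$ (i,j)) * v $. j)"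
      using eq[symmetric] i v cR R by (simp add: mv_entry[of _ n] cpx_def del: index_mult_mat_vec)
    also have "\<dots> \<le> (\<Sum>j<n. norm (of_real (R $$ (i,j)) * v $. j))" by (rule norm_sum)
    also have "\<dots> = (\<Sum>j<n. R $$ (i,j) * w $. j)"
      using i nnR by (intro sum.cong) (auto simp: w_def norm_mult)
    also have "\<dots> \<le> (\<Sum>j<n. S $$ (i,j) * w $. j)"
      using i le by (intro sum_mono mult_right_mono) (auto simp: w_def)
    also have "\<dots> = (S *\<^sub>v w) $. i" using S w i by (simp add: mv_entry[of _ n] del: index_mult_mat_vec)
    finally show "spectral_radius (cpx R) * w $. i \<le> (S *\<^sub>v w) $. i" .
  qed
qed



definition tomat :: "(nat \<Rightarrow> 'n::finite) \<Rightarrow> real^'n^'n \<Rightarrow> real mat" where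
  "tomat h M = mat CARD('n) CARD('n) (\<lambda>(i,j). M $ h i $ h j)"

lemma spec_rad_tomat:
  fixes M :: "real^'n::finite^'n" and h :: "nat \<Rightarrow> 'n"
  assumes h: "bij_betw h {0..<CARD('n)} UNIV"
  shows "spec_rad M = spectral_radius (cpx (tomat h M))"
proof -
  let ?n = "CARD('n)"
  let ?C = "cpx (tomat h M)"
  have C: "?C \<in> carrier_mat ?n ?n" by (simp add: cpx_def tomat_def)
  define g where "g = inv_into {0..<?n} h"
  have hg: "\<And>j. h (g j) = j" using h unfolding g_def
    by (meson UNIV_I bij_betw_inv_into_right)
  have gh: "\<And>i. i < ?n \<Longrightarrow> g (h i) = i" using h unfolding g_def
    by (simp add: bij_betw_def)
  have gn: "\<And>j. g j < ?n" using h unfolding g_def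
    by (metis UNIV_I atLeastLessThan_iff bij_betw_def inv_into_into)
  have reidx: "\<And>f. (\<Sum>k<?n. f (h k)) = (\<Sum>j\<in>UNIV. f j)"
    using sum.reindex_bij_betw[OF h] by (simp add: atLeast0LessThan)
  have key: "(\<exists>v::complex^'n. v \<noteq> 0 \<and> (\<chi> i j. complex_of_real (M$i$j)) *v v = (\<chi> i. l * v$i))
      \<longleftrightarrow> l \<in> spectrum ?C" for l
  proof
    assume "\<exists>v::complex^'n. v \<noteq> 0 \<and> (\<chi> i j. complex_of_real (M$i$j)) *v v = (\<chi> i. l * v$i)"
    then obtain v :: "complex^'n" where v0: "v \<noteq> 0"
      and ev: "(\<chi> i j. complex_of_real (M$i$j)) *v v = (\<chi> i. l * v$i)" by blast
    define V where "V = vec ?n (\<lambda>i. v $ h i)"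
    have V: "V \<in> carrier_vec ?n" by (simp add: V_def)
    have "V \<noteq> 0\<^sub>v ?n"
    proof
      assume "V = 0\<^sub>v ?n"
      hence "\<And>i. i < ?n \<Longrightarrow> v $ h i = 0" unfolding V_def
        by (metis index_vec index_zero_vec(1))
      hence "\<forall>j. v $ j = 0" using gn hg by metis
      hence "v = 0" by (simp add: Finite_Cartesian_Product.vec_eq_iff)
      thus False using v0 by simp
    qed
    moreover have "?C *\<^sub>v V = l \<cdot>\<^sub>v V"
    proof (rule eq_vecI)
      fix i assume "i < dim_vec (l \<cdot>\<^sub>v V)"
      hence i: "i < ?n" by (simp add: V_def)
      have "(?C *\<^sub>v V) $. i = (\<Sum>k<?n. complex_of_real (M $ h i $ h k) * v $ h k)"
        using i C V by (simp add: mv_entry[of _ ?n] cpx_def tomat_def V_def del: index_mult_mat_vec)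
      also have "\<dots> = (\<Sum>j\<in>UNIV. complex_of_real (M $ h i $ j) * v $ j)" by (rule reidx)
      also have "\<dots> = ((\<chi> i j. complex_of_real (M$i$j)) *v v) $ h i"
        by (simp add: matrix_vector_mult_def)
      also have "\<dots> = l * v $ h i" using ev by simp
      finally show "(?C *\<^sub>v V) $. i = (l \<cdot>\<^sub>v V) $. i" using i by (simp add: V_def)
    qed (simp add: V_def cpx_def tomat_def)
    ultimately show "l \<in> spectrum ?C" using V C
      unfolding spectrum_def eigenvalue_def eigenvector_def by auto
  next
    assume "l \<in> spectrum ?C"
    then obtain V where V: "V \<in> carrier_vec ?n" "V \<noteq> 0\<^sub>v ?n" and ev: "?C *\<^sub>v V = l \<cdot>\<^sub>v V"
      using C unfolding spectrum_def eigenvalue_def eigenvector_def by auto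
    define v :: "complex^'n" where "v = (\<chi> j. V $. g j)"
    have "v \<noteq> 0"
    proof
      assume "v = 0"
      hence "\<And>i. i < ?n \<Longrightarrow> V $. i = 0" unfolding v_def
        by (metis gh vec_lambda_beta zero_index)
      thus False using V by (metis eq_vecI carrier_vecD index_zero_vec(1,2))
    qed
    moreover have "(\<chi> i j. complex_of_real (M$i$j)) *v v = (\<chi> i. l * v$i)"
    proof (subst Finite_Cartesian_Product.vec_eq_iff, intro allI)
      fix j
      have "((\<chi> i j. complex_of_real (M$i$j)) *v v) $ j = (\<Sum>k\<in>UNIV. complex_of_real (M $ j $ k) * V $. g k)"
        by (simp add: matrix_vector_mult_def v_def)
      also have "\<dots> = (\<Sum>k<?n. complex_of_real (M $ h (g j) $ h k) * V $. k)"
        using reidx[of "\<lambda>k. complex_of_real (M $ j $ k) * V $. g k"] gh hg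
        by (metis (no_types, lifting) lessThan_iff sum.cong)
      also have "\<dots> = (?C *\<^sub>v V) $. g j"
        using gn[of j] C V by (simp add: mv_entry[of _ ?n] cpx_def tomat_def del: index_mult_mat_vec)
      also have "\<dots> = l * v $ j" using ev gn[of j] V by (simp add: v_def)
      finally show "((\<chi> i j. complex_of_real (M$i$j)) *v v) $ j = (\<chi> i. l * v$i) $ j" by simp
    qed
    ultimately show "\<exists>v::complex^'n. v \<noteq> 0 \<and> (\<chi> i j. complex_of_real (M$i$j)) *v v = (\<chi> i. l * v$i)"
      by blast
  qed
  have "{cmod l | l. \<exists>v::complex^'n. v \<noteq> 0 \<and>
       (\<chi> i j. complex_of_real (M$i$j)) *v v = (\<chi> i. l * v$i)} = norm ` spectrum ?C"
    using key by blast
  thus ?thesis unfolding spec_rad_def spectral_radius_def by simp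
qed



lemma diag_mult_entry: "(diag_mat x ** B) $ i $ j = x $ i * B $ i $ j"
proof -
  have "(diag_mat x ** B) $ i $ j = (\<Sum>k\<in>UNIV. (if i = k then x $ i else 0) * B $ k $ j)"
    by (simp add: matrix_matrix_mult_def Defs.diag_mat_def)
  also have "\<dots> = x $ i * B $ i $ j"
    by (simp add: if_distrib[of "\<lambda>a. a * _"] cong: if_cong)
  finally show ?thesis .
qed

lemma entry_mono:
  fixes A :: "(real^'n) \<times> (real^'n) \<Rightarrow> real^'n^'n"
    and A' :: "(real^'n) \<times> (real^'n) \<Rightarrow> ((real^'n) \<times> (real^'n)) \<Rightarrow>\<^sub>L (real^'n^'n)"
  assumes A_deriv: "\<And>p. p \<in> unit_cube \<times> unit_cube \<Longrightarrow>
                   (A has_derivative blinfun_apply (A' p)) (at p within unit_cube \<times> unit_cube)"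
    and diag_cond: "\<And>x y i j. x \<in> unit_cube \<Longrightarrow> y \<in> unit_cube \<Longrightarrow>
                   A (x, y) $ i $ j + x $ i * (A' (x, y) (axis i 1, 0)) $ i $ j \<ge> 0"
    and offdiag_cond: "\<And>x y i j k. x \<in> unit_cube \<Longrightarrow> y \<in> unit_cube \<Longrightarrow> k \<noteq> i \<Longrightarrow>
                   (A' (x, y) (axis k 1, 0)) $ i $ j \<ge> 0"
    and x: "x \<in> unit_cube" and z: "z \<in> unit_cube" and xz: "\<And>i. x $ i \<le> z $ i"
  shows "x $ i * A (x, 0) $ i $ j \<le> z $ i * A (z, 0) $ i $ j"
proof -
  define d where "d = z - x"
  define p where "p = (\<lambda>t::real. x + t *\<^sub>R d)"
  define f where "f = (\<lambda>t. p t $ i * A (p t, 0) $ i $ j)"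
  have d0: "\<And>k. d $ k \<ge> 0" using xz by (simp add: d_def)
  have pc: "p t \<in> unit_cube" if "t \<in> {0..1}" for t
  proof -
    have "0 \<le> p t $ k \<and> p t $ k \<le> 1" for k
    proof -
      have "x $ k \<le> p t $ k" using that d0[of k] by (simp add: p_def)
      moreover have "p t $ k \<le> z $ k"
        using that d0[of k] mult_left_le_one_le[of "d $ k" t] by (simp add: p_def d_def)
      moreover have "0 \<le> x $ k" "z $ k \<le> 1" using x z unfolding unit_cube_def by auto
      ultimately show ?thesis by linarith
    qed
    thus ?thesis unfolding unit_cube_def by simp
  qed
  have zc: "(0::real^'n) \<in> unit_cube" unfolding unit_cube_def by simp
  have der: "(f has_derivative (\<lambda>h. p t $ i * (A' (p t, 0) (h *\<^sub>R d, 0)) $ i $ j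
        + (h *\<^sub>R d) $ i * A (p t, 0) $ i $ j)) (at t within {0..1})"
    if t: "t \<in> {0..1}" for t
  proof -
    have q: "((\<lambda>t. (p t, 0::real^'n)) has_derivative (\<lambda>h. (h *\<^sub>R d, 0))) (at t within {0..1})"
      unfolding p_def by (auto intro!: derivative_eq_intros)
    have Aq: "((\<lambda>t. A (p t, 0)) has_derivative (\<lambda>h. A' (p t, 0) (h *\<^sub>R d, 0))) (at t within {0..1})"
      using has_derivative_in_compose2[OF A_deriv _ t q] pc zc by (auto simp: image_subset_iff)
    have Aij: "((\<lambda>t. A (p t, 0) $ i $ j) has_derivative (\<lambda>h. A' (p t, 0) (h *\<^sub>R d, 0) $ i $ j)) (at t within {0..1})"
      using bounded_linear.has_derivative[OF bounded_linear_vec_nth[of j]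
          bounded_linear.has_derivative[OF bounded_linear_vec_nth[of i] Aq]] .
    have pi: "((\<lambda>t. p t $ i) has_derivative (\<lambda>h. (h *\<^sub>R d) $ i)) (at t within {0..1})"
      using bounded_linear.has_derivative[OF bounded_linear_vec_nth[of i]]
      unfolding p_def by (auto intro!: derivative_eq_intros)
    show ?thesis unfolding f_def using has_derivative_mult[OF pi Aij] .
  qed
  have Dnn: "0 \<le> p t $ i * (A' (p t, 0) (d, 0)) $ i $ j + d $ i * A (p t, 0) $ i $ j"
    if t: "t \<in> {0..1}" for t
  proof -
    let ?B = "\<lambda>k. (A' (p t, 0) (axis k 1, 0)) $ i $ j"
    have dsum: "(d, 0::real^'n) = (\<Sum>k\<in>UNIV. d $ k *\<^sub>R (axis k 1, 0::real^'n))"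
    proof -
      have "d = (\<Sum>k\<in>UNIV. d $ k *s axis k 1)" by (rule basis_expansion[symmetric])
      hence "fst (d, 0::real^'n) = fst (\<Sum>k\<in>UNIV. d $ k *\<^sub>R (axis k 1, 0::real^'n))"
        by (simp add: fst_sum scalar_mult_eq_scaleR)
      moreover have "snd (d, 0::real^'n) = snd (\<Sum>k\<in>UNIV. d $ k *\<^sub>R (axis k 1, 0::real^'n))"
        by (simp add: snd_sum)
      ultimately show ?thesis by (simp add: prod_eq_iff)
    qed
    have "(A' (p t, 0) (d, 0)) $ i $ j = (\<Sum>k\<in>UNIV. d $ k * ?B k)"
      by (subst dsum) (simp add: blinfun.sum_right blinfun.scaleR_right sum_component del: scaleR_Pair)
    also have "\<dots> = d $ i * ?B i + (\<Sum>k\<in>UNIV - {i}. d $ k * ?B k)"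
      by (simp add: sum.remove)
    finally have e: "(A' (p t, 0) (d, 0)) $ i $ j = d $ i * ?B i + (\<Sum>k\<in>UNIV - {i}. d $ k * ?B k)" .
    have pi0: "p t $ i \<ge> 0" using pc[OF t] unfolding unit_cube_def by simp
    have s0: "(\<Sum>k\<in>UNIV - {i}. d $ k * ?B k) \<ge> 0"
      using d0 offdiag_cond[OF pc[OF t] zc] by (intro sum_nonneg mult_nonneg_nonneg) auto
    have "0 \<le> d $ i * (A (p t, 0) $ i $ j + p t $ i * ?B i)"
      using d0[of i] diag_cond[OF pc[OF t] zc] by simp
    also have "\<dots> \<le> d $ i * (A (p t, 0) $ i $ j + p t $ i * ?B i) + p t $ i * (\<Sum>k\<in>UNIV - {i}. d $ k * ?B k)"
      using pi0 s0 by simp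
    also have "\<dots> = p t $ i * (A' (p t, 0) (d, 0)) $ i $ j + d $ i * A (p t, 0) $ i $ j"
      unfolding e by (simp add: algebra_simps)
    finally show ?thesis .
  qed
  have "f 0 \<le> f 1"
  proof (rule DERIV_nonneg_imp_increasing_open[of 0 1 f])
    show "continuous_on {0..1} f" using der by (rule has_derivative_continuous_on)
    fix t :: real assume t: "0 < t" "t < 1"
    have tt: "t \<in> {0..1}" using t by auto
    have "(f has_real_derivative (p t $ i * (A' (p t, 0) (d, 0)) $ i $ j + d $ i * A (p t, 0) $ i $ j)) (at t)"
    proof (rule has_derivative_imp_has_field_derivative)
      show "(f has_derivative (\<lambda>h. p t $ i * (A' (p t, 0) (h *\<^sub>R d, 0)) $ i $ j
        + (h *\<^sub>R d) $ i * A (p t, 0) $ i $ j)) (at t)"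
        using der[OF tt] at_within_Icc_at[OF t] by simp
      fix h :: real
      have "(A' (p t, 0) (h *\<^sub>R d, 0)) = h *\<^sub>R (A' (p t, 0) (d, 0))"
        by (metis blinfun.scaleR_right scaleR_Pair scaleR_zero_right)
      thus "h * (p t $ i * (A' (p t, 0) (d, 0)) $ i $ j + d $ i * A (p t, 0) $ i $ j) =
        p t $ i * (A' (p t, 0) (h *\<^sub>R d, 0)) $ i $ j + (h *\<^sub>R d) $ i * A (p t, 0) $ i $ j"
        by (simp add: algebra_simps)
    qed
    thus "\<exists>y. (f has_real_derivative y) (at t) \<and> 0 \<le> y" using Dnn[OF tt] by blast
  qed simp
  moreover have "p 0 = x" "p 1 = z" by (auto simp: p_def d_def)
  ultimately show ?thesis by (simp add: f_def)
qed

theorem proposition2: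
  fixes A :: "(real^'n) \<times> (real^'n) \<Rightarrow> real^'n^'n"
    and A' :: "(real^'n) \<times> (real^'n) \<Rightarrow> ((real^'n) \<times> (real^'n)) \<Rightarrow>\<^sub>L (real^'n^'n)"
    and gamma :: real
  assumes gamma_pos: "gamma > 0"
    and A_nonneg: "\<And>p i j. p \<in> unit_cube \<times> unit_cube \<Longrightarrow> A p $ i $ j \<ge> 0"
    and A_deriv: "\<And>p. p \<in> unit_cube \<times> unit_cube \<Longrightarrow>
                   (A has_derivative blinfun_apply (A' p)) (at p within unit_cube \<times> unit_cube)"
    and A'_cont: "continuous_on (unit_cube \<times> unit_cube) A'"
    and diag_cond: "\<And>x y i j. x \<in> unit_cube \<Longrightarrow> y \<in> unit_cube \<Longrightarrow>
                   A (x, y) $ i $ j + x $ i * (A' (x, y) (axis i 1, 0)) $ i $ j \<ge> 0"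
    and offdiag_cond: "\<And>x y i j k. x \<in> unit_cube \<Longrightarrow> y \<in> unit_cube \<Longrightarrow> k \<noteq> i \<Longrightarrow>
                   (A' (x, y) (axis k 1, 0)) $ i $ j \<ge> 0"
  shows "(\<forall>x\<in>unit_cube. \<forall>z\<in>unit_cube. (\<forall>i. x $ i \<le> z $ i) \<longrightarrow>
            spec_rad (diag_mat x ** A (x, 0)) \<le> spec_rad (diag_mat z ** A (z, 0)))
       \<and> (\<forall>x\<in>unit_cube. \<forall>z\<in>unit_cube. (\<forall>i. x $ i \<le> z $ i) \<longrightarrow>
            spec_rad (diag_mat z ** A (z, 0)) < gamma \<longrightarrow>
            spec_rad (diag_mat x ** A (x, 0)) < gamma)"
  proof -
  obtain h :: "nat \<Rightarrow> 'n" where h: "bij_betw h {0..<CARD('n)} UNIV"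
    using ex_bij_betw_nat_finite[of "UNIV :: 'n set"] by auto
  have zc: "(0::real^'n) \<in> unit_cube" unfolding unit_cube_def by simp
  have mono: "\<forall>x\<in>unit_cube. \<forall>z\<in>unit_cube. (\<forall>i. x $ i \<le> z $ i) \<longrightarrow>
            spec_rad (diag_mat x ** A (x, 0)) \<le> spec_rad (diag_mat z ** A (z, 0))"
  proof (intro ballI impI)
    fix x z :: "real^'n"
    assume x: "x \<in> unit_cube" and z: "z \<in> unit_cube" and xz: "\<forall>i. x $ i \<le> z $ i"
    let ?n = "CARD('n)"
    show "spec_rad (diag_mat x ** A (x, 0)) \<le> spec_rad (diag_mat z ** A (z, 0))"
      unfolding spec_rad_tomat[OF h]
    proof (rule perron_mono[of _ ?n])
      show "tomat h (diag_mat x ** A (x, 0)) \<in> carrier_mat ?n ?n"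
        "tomat h (diag_mat z ** A (z, 0)) \<in> carrier_mat ?n ?n" "0 < ?n"
        by (auto simp: tomat_def)
      fix i j assume ij: "i < ?n" "j < ?n"
      have "0 \<le> x $ h i * A (x, 0) $ h i $ h j"
        using x A_nonneg[of "(x,0)"] zc unfolding unit_cube_def by auto
      thus "0 \<le> tomat h (diag_mat x ** A (x, 0)) $$ (i, j)"
        using ij by (simp add: tomat_def diag_mult_entry)
      have "x $ h i * A (x, 0) $ h i $ h j \<le> z $ h i * A (z, 0) $ h i $ h j"
        using entry_mono[OF A_deriv diag_cond offdiag_cond x z] xz by blast
      thus "tomat h (diag_mat x ** A (x, 0)) $$ (i, j) \<le> tomat h (diag_mat z ** A (z, 0)) $$ (i, j)"
        using ij by (simp add: tomat_def diag_mult_entry)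
    qed
  qed
  show ?thesis
  proof (intro conjI)
    show "\<forall>x\<in>unit_cube. \<forall>z\<in>unit_cube. (\<forall>i. x $ i \<le> z $ i) \<longrightarrow>
            spec_rad (diag_mat z ** A (z, 0)) < gamma \<longrightarrow>
            spec_rad (diag_mat x ** A (x, 0)) < gamma"
      using mono by (meson order_le_less_trans)
  qed (rule mono)
qed

end
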